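(* Let $n\ge3$ and let $V:\mathbb{R}^n\to\mathbb{R}$ be $C^1$ and satisfy: there is $L>0$ such that for all $x$ with $|x_1|>L$, $-x_j\,\partial_{x_j}V(x)\ge0$ for every $j=1,\dots,n$. Then for every $x'\in\mathbb{R}^n$ and every $x\notin[-L,L]\times\mathbb{R}^{n-1}$ (with $x\notin\operatorname{sym}\{x'\}$), $$ i\Big[V,\sum_{c\in\operatorname{sym}\{x'\}}\gamma_c^{Mor}\Big](x)=\sum_{j=1}^n\Big\{-2\,\partial_{x_j}V(x)\sum_{c\in\operatorname{sym}\{x'\}}\frac{x_j-c_j}{|x-c|}\Big\}\ \ge\ 0. $$
   Context: $\gamma_c^{Mor}=-i\big(\frac{x-c}{|x-c|}\cdot\nabla+\nabla\cdot\frac{x-c}{|x-c|}\big)$, so $i[V,\gamma_c^{Mor}]$ is multiplication by $-2\frac{x-c}{|x-c|}\cdot\nabla V$. For $x'=(x'_1,\dots,x'_n)$, $\operatorname{sym}\{x'\}=\{(\pm x'_1,\dots,\pm x'_n)\}$, the set of all points obtained by independent sign changes of the coordinates (as a set, so repeated points counted once). *)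

theory Defs
  imports "HOL-Analysis.Analysis"
begin

text \<open>R^n is modelled as real^'n with 'n a finite well-ordered index type;
  the first coordinate x_1 is the component at the least index.\<close>
definition first_idx :: "'n::{finite,wellorder}" where
  "first_idx = (LEAST i. True)"

definition partial :: "'n::finite \<Rightarrow> (real^'n \<Rightarrow> real) \<Rightarrow> real^'n \<Rightarrow> real" where
  "partial j V x = frechet_derivative V (at x) (axis j 1)"

definition C1_fun :: "(real^'n::finite \<Rightarrow> real) \<Rightarrow> bool" where
  "C1_fun V \<longleftrightarrow> (\<forall>x. V differentiable (at x)) \<and> (\<forall>j. continuous_on UNIV (partial j V))"

definition sym_set :: "real^'n::finite \<Rightarrow> (real^'n) set" where
  "sym_set x' = {(\<chi> j. s j * x' $ j) | s. \<forall>j. s j \<in> {-1, 1}}"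

text \<open>The multiplication function i[V, gamma_c^Mor](x) = -2 (x-c)/|x-c| . grad V(x).\<close>
definition mor_commutator :: "(real^'n::finite \<Rightarrow> real) \<Rightarrow> real^'n \<Rightarrow> real^'n \<Rightarrow> real" where
  "mor_commutator V c x = -2 * (\<Sum>j\<in>UNIV. ((x $ j - c $ j) / norm (x - c)) * partial j V x)"

end

theory Submission
  imports Defs
begin

lemma mono_h:
  fixes R t1 t2 d1 d2 :: real
  assumes "R \<ge> 0" "d1 > 0" "d2 > 0" "d1^2 = R + t1^2" "d2^2 = R + t2^2" "t1 \<le> t2"
  shows "t1 / d1 \<le> t2 / d2"
proof -
  have key: "(t1*d2)^2 - (t2*d1)^2 = (t1^2 - t2^2) * R" using assms
    by (simp add: power_mult_distrib algebra_simps)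
  have "t1 * d2 \<le> t2 * d1"
  proof (cases "t1 \<le> 0 \<and> 0 \<le> t2")
    case True
    have "t1 * d2 \<le> 0" using True assms by (simp add: mult_nonpos_nonneg)
    moreover have "0 \<le> t2 * d1" using True assms by simp
    ultimately show ?thesis by linarith
  next
    case False
    hence "t1 > 0 \<or> t2 < 0" by auto
    thus ?thesis
    proof
      assume p: "t1 > 0"
      have "t1^2 \<le> t2^2" using p assms(6) by (intro power_mono) auto
      hence "(t1^2 - t2^2) * R \<le> 0" using assms(1) by (simp add: mult_nonpos_nonneg)
      hence "(t1*d2)^2 \<le> (t2*d1)^2" using key by linarith
      moreover have "0 \<le> t2*d1" using p assms by simp
      ultimately show ?thesis using power2_le_imp_le by blast
    next
      assume p: "t2 < 0"
      have "t2^2 \<le> t1^2" using p assms(6)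
        by (metis abs_le_square_iff abs_of_neg le_less_trans neg_le_iff_le abs_minus_cancel order.refl linorder_not_less less_le_not_le)
      hence "0 \<le> (t1^2 - t2^2) * R" using assms(1) by simp
      hence "((-t2)*d1)^2 \<le> ((-t1)*d2)^2" using key by simp
      moreover have "0 \<le> (-t1)*d2" using p assms(3,6) by (intro mult_nonneg_nonneg) auto
      ultimately have "(-t2)*d1 \<le> (-t1)*d2" using power2_le_imp_le by blast
      thus ?thesis by simp
    qed
  qed
  thus ?thesis using assms by (simp add: divide_simps mult.commute)
qed
definition flipj :: "'n::finite \<Rightarrow> real^'n \<Rightarrow> real^'n" where
  "flipj j c = (\<chi> k. if k = j then - c$k else c$k)"

lemma norm_split: "(norm (y::real^'n::finite))^2 = (\<Sum>k\<in>UNIV-{j}. (y$k)^2) + (y$j)^2"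
proof -
  have "(norm y)^2 = (\<Sum>k\<in>UNIV. (y$k)^2)"
    unfolding power2_norm_eq_inner inner_vec_def by (simp add: power2_eq_square)
  also have "\<dots> = (y$j)^2 + (\<Sum>k\<in>UNIV-{j}. (y$k)^2)"
    by (simp add: sum.remove)
  finally show ?thesis by simp
qed

lemma pair_sign:
  fixes x c :: "real^'n::finite"
  assumes "x \<noteq> c" "x \<noteq> flipj j c"
  defines "g \<equiv> \<lambda>c. (x$j - c$j) / norm (x - c)"
  shows "(x$j \<ge> 0 \<longrightarrow> g c + g (flipj j c) \<ge> 0) \<and> (x$j \<le> 0 \<longrightarrow> g c + g (flipj j c) \<le> 0)"
proof -
  define R where "R = (\<Sum>k\<in>UNIV-{j}. (x$k - c$k)^2)"
  have R0: "R \<ge> 0" unfolding R_def by (simp add: sum_nonneg)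
  have d1: "(norm (x - c))^2 = R + (x$j - c$j)^2" unfolding R_def using norm_split[of "x-c" j] by simp
  have fj: "flipj j c $ j = - c$j" by (simp add: flipj_def)
  have "(norm (x - flipj j c))^2 = (\<Sum>k\<in>UNIV-{j}. ((x - flipj j c)$k)^2) + (x$j + c$j)^2"
    using norm_split[of "x - flipj j c" j] fj by simp
  also have "(\<Sum>k\<in>UNIV-{j}. ((x - flipj j c)$k)^2) = R" unfolding R_def
    by (intro sum.cong) (auto simp: flipj_def)
  finally have d2: "(norm (x - flipj j c))^2 = R + (x$j + c$j)^2" .
  have p1: "norm (x - c) > 0" using assms(1) by simp
  have p2: "norm (x - flipj j c) > 0" using assms(2) by simp
  have gc: "g c = (x$j - c$j) / norm (x - c)" by (simp add: g_def)
  have gf: "g (flipj j c) = (x$j + c$j) / norm (x - flipj j c)" by (simp add: g_def fj)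
  show ?thesis
  proof (intro conjI impI)
    assume "x$j \<ge> 0"
    hence ineq: "-(x$j - c$j) \<le> x$j + c$j" by simp
    have d1': "(norm (x-c))^2 = R + (-(x$j - c$j))^2" using d1 by (simp only: power2_minus)
    from mono_h[OF R0 p1 p2 d1' d2 ineq]
    have "(-(x$j - c$j)) / norm (x - c) \<le> (x$j + c$j) / norm (x - flipj j c)" by simp
    thus "g c + g (flipj j c) \<ge> 0" unfolding gc gf using minus_divide_left[of "x$j - c$j" "norm(x-c)"] by linarith
  next
    assume "x$j \<le> 0"
    hence ineq: "x$j + c$j \<le> -(x$j - c$j)" by simp
    have d1': "(norm (x-c))^2 = R + (-(x$j - c$j))^2" using d1 by (simp only: power2_minus)
    from mono_h[OF R0 p2 p1 d2 d1' ineq]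
    have "(x$j + c$j) / norm (x - flipj j c) \<le> (-(x$j - c$j)) / norm (x - c)" by simp
    thus "g c + g (flipj j c) \<le> 0" unfolding gc gf using minus_divide_left[of "x$j - c$j" "norm(x-c)"] by linarith
  qed
qed

lemma finite_sym: "finite (sym_set (x'::real^'n::finite))"
proof -
  have "sym_set x' \<subseteq> (\<lambda>s. \<chi> j. s j * x' $ j) ` (PiE UNIV (\<lambda>_. {-1,1::real}))"
    unfolding sym_set_def by (auto simp: PiE_UNIV_domain)
  moreover have "finite (PiE (UNIV::'n set) (\<lambda>_. {-1,1::real}))" by (intro finite_PiE) auto
  ultimately show ?thesis using finite_subset by blast
qed

lemma flip_in: "c \<in> sym_set x' \<Longrightarrow> flipj j c \<in> sym_set x'"
proof -
  assume "c \<in> sym_set x'"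
  then obtain s where s: "c = (\<chi> j. s j * x' $ j)" "\<forall>j. s j \<in> {-1, 1}" unfolding sym_set_def by blast
  let ?s = "s(j := - s j)"
  have "flipj j c = (\<chi> k. ?s k * x' $ k)" using s by (simp add: flipj_def vec_eq_iff)
  moreover have "\<forall>k. ?s k \<in> {-1,1}" using s(2) by auto
  ultimately show ?thesis unfolding sym_set_def by blast
qed

lemma flip_flip: "flipj j (flipj j c) = c" by (simp add: flipj_def vec_eq_iff)

lemma sumS_sign:
  fixes x x' :: "real^'n::finite" and j :: 'n
  assumes "x \<notin> sym_set x'"
  defines "S \<equiv> (\<Sum>c\<in>sym_set x'. (x $ j - c $ j) / norm (x - c))"
  shows "(x$j \<ge> 0 \<longrightarrow> S \<ge> 0) \<and> (x$j \<le> 0 \<longrightarrow> S \<le> 0)"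
proof -
  define g where "g = (\<lambda>c. (x$j - c$j) / norm (x - c))"
  let ?A = "sym_set x'"
  have bij: "bij_betw (flipj j) ?A ?A"
    by (rule bij_betw_byWitness[where f'="flipj j"]) (auto simp: flip_flip flip_in image_def intro!: bexI[of _ "flipj j _"])
  have "S = sum g ?A" by (simp add: S_def g_def)
  moreover have "sum g ?A = sum (g \<circ> flipj j) ?A"
    using sum.reindex_bij_betw[OF bij, of g] by simp
  ultimately have "2 * S = (\<Sum>c\<in>?A. g c + g (flipj j c))" by (simp add: sum.distrib)
  moreover have "\<forall>c\<in>?A. (x$j \<ge> 0 \<longrightarrow> g c + g (flipj j c) \<ge> 0) \<and> (x$j \<le> 0 \<longrightarrow> g c + g (flipj j c) \<le> 0)"
  proof
    fix c assume c: "c \<in> ?A"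
    have "x \<noteq> c" "x \<noteq> flipj j c" using c assms(1) flip_in[OF c] by auto
    from pair_sign[OF this] show "(x$j \<ge> 0 \<longrightarrow> g c + g (flipj j c) \<ge> 0) \<and> (x$j \<le> 0 \<longrightarrow> g c + g (flipj j c) \<le> 0)"
      unfolding g_def by blast
  qed
  ultimately show ?thesis
  proof -
    assume e: "2 * S = (\<Sum>c\<in>?A. g c + g (flipj j c))"
      and a: "\<forall>c\<in>?A. (x$j \<ge> 0 \<longrightarrow> g c + g (flipj j c) \<ge> 0) \<and> (x$j \<le> 0 \<longrightarrow> g c + g (flipj j c) \<le> 0)"
    show ?thesis
    proof (intro conjI impI)
      assume "x$j \<ge> 0"
      hence "(\<Sum>c\<in>?A. g c + g (flipj j c)) \<ge> 0" using a by (intro sum_nonneg) auto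
      thus "S \<ge> 0" using e by linarith
    next
      assume "x$j \<le> 0"
      hence "(\<Sum>c\<in>?A. g c + g (flipj j c)) \<le> 0" using a by (intro sum_nonpos) auto
      thus "S \<le> 0" using e by linarith
    qed
  qed
qed

lemma sumS_zero:
  fixes x x' :: "real^'n::finite"
  assumes "x \<notin> sym_set x'" "x$j = 0"
  shows "(\<Sum>c\<in>sym_set x'. (x $ j - c $ j) / norm (x - c)) = 0"
  using sumS_sign[OF assms(1), of j] assms(2) by auto

lemma aux:
  fixes V :: "real^'n::finite \<Rightarrow> real" and x x' :: "real^'n"
  assumes xs: "x \<notin> sym_set x'" and hyp: "\<forall>j. - (x $ j) * partial j V x \<ge> 0"
  shows "(\<Sum>c\<in>sym_set x'. mor_commutator V c x)
             = (\<Sum>j\<in>UNIV. - 2 * partial j V x * (\<Sum>c\<in>sym_set x'. (x $ j - c $ j) / norm (x - c)))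
         \<and> (\<Sum>j\<in>UNIV. - 2 * partial j V x * (\<Sum>c\<in>sym_set x'. (x $ j - c $ j) / norm (x - c))) \<ge> 0"
proof (intro conjI)
  show "(\<Sum>c\<in>sym_set x'. mor_commutator V c x)
             = (\<Sum>j\<in>UNIV. - 2 * partial j V x * (\<Sum>c\<in>sym_set x'. (x $ j - c $ j) / norm (x - c)))"
    unfolding mor_commutator_def
    by (simp add: sum_distrib_left sum_distrib_right sum.swap[of _ "sym_set x'"] algebra_simps)
  show "(\<Sum>j\<in>UNIV. - 2 * partial j V x * (\<Sum>c\<in>sym_set x'. (x $ j - c $ j) / norm (x - c))) \<ge> 0"
  proof (rule sum_nonneg)
    fix j :: 'n
    let ?S = "(\<Sum>c\<in>sym_set x'. (x $ j - c $ j) / norm (x - c))"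
    have h: "- (x $ j) * partial j V x \<ge> 0" using hyp by blast
    have sg: "(x$j \<ge> 0 \<longrightarrow> ?S \<ge> 0) \<and> (x$j \<le> 0 \<longrightarrow> ?S \<le> 0)" using sumS_sign[OF xs] by blast
    consider "x$j > 0" | "x$j < 0" | "x$j = 0" by linarith
    then show "- 2 * partial j V x * ?S \<ge> 0"
    proof cases
      case 1
      hence "partial j V x \<le> 0" using h by (simp add: mult_le_0_iff)
      moreover have "?S \<ge> 0" using sg 1 by simp
      ultimately show ?thesis by (simp add: mult_nonpos_nonneg)
    next
      case 2
      have "partial j V x \<ge> 0"
      proof (rule ccontr)
        assume "\<not> partial j V x \<ge> 0"
        hence "x$j * partial j V x > 0" using 2 by (intro mult_neg_neg) auto
        thus False using h by linarith
      qed
      moreover have "?S \<le> 0" using sg 2 by simp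
      ultimately show ?thesis by (simp add: mult_nonneg_nonpos mult_le_0_iff)
    next
      case 3
      thus ?thesis using sumS_zero[OF xs 3] by simp
    qed
  qed
qed


theorem lemma4p5:
  fixes V :: "real^'n::{finite,wellorder} \<Rightarrow> real" and L :: real
  assumes n3: "CARD('n) \<ge> 3"
    and C1: "C1_fun V"
    and Lpos: "L > 0"
    and hyp: "\<And>x j. \<bar>x $ first_idx\<bar> > L \<Longrightarrow> - (x $ j) * partial j V x \<ge> 0"
  shows "\<forall>x' x. \<bar>x $ first_idx\<bar> > L \<longrightarrow> x \<notin> sym_set x' \<longrightarrow>
           (\<Sum>c\<in>sym_set x'. mor_commutator V c x)
             = (\<Sum>j\<in>UNIV. - 2 * partial j V x * (\<Sum>c\<in>sym_set x'. (x $ j - c $ j) / norm (x - c)))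
         \<and> (\<Sum>j\<in>UNIV. - 2 * partial j V x * (\<Sum>c\<in>sym_set x'. (x $ j - c $ j) / norm (x - c))) \<ge> 0"
  using hyp by (intro allI impI aux) auto

end
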